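(* Let $k\ge2$ and $\ell\ge1$. Then $D_k(\ell)\ge (k+1)k^{\ell/2-1}-1$ if $\ell$ is even, and $D_k(\ell)\ge 2k^{(\ell-1)/2}-1$ if $\ell$ is odd.
   Context: Labeled chip-firing on the infinite rooted directed $k$-ary tree (each vertex has $k$ children ordered left to right, root on layer $1$): a vertex with at least $k$ chips may fire by choosing any $k$ of its chips and sending the $i$-th smallest label among them to its $i$-th leftmost child; a configuration is stable when no vertex has $\ge k$ chips. Starting with $k^\ell$ chips labeled $1,\dots,k^\ell$ at the root, every stable configuration has exactly one chip on each vertex of layer $\ell+1$ and none elsewhere, and is identified with the permutation of labels read left to right on layer $\ell+1$. $D_k(\ell)$ denotes the maximum, over all reachable stable configurations, of the length of the longest strictly decreasing subsequence of the corresponding permutation. *)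

theory Defs
  imports Main
begin

(* Vertices of the infinite rooted k-ary tree are lists of child indices (each < k);
   the root is [], and a vertex w lies on layer (length w + 1).
   The i-th leftmost child of v (0-based i < k) is v @ [i].
   A labeled configuration assigns to each vertex the (finite) set of labels of its chips. *)

type_synonym vertex = "nat list"
type_synonym config = "vertex \<Rightarrow> nat set"

definition is_vertex :: "nat \<Rightarrow> vertex \<Rightarrow> bool" where
  "is_vertex k w \<longleftrightarrow> (\<forall>x\<in>set w. x < k)"

(* One firing move: vertex v fires k of its chips, the set S; the i-th smallest label
   (0-based i) goes to the i-th leftmost child v @ [i]. *)
definition fire :: "nat \<Rightarrow> config \<Rightarrow> config \<Rightarrow> bool" where
  "fire k C C' \<longleftrightarrow>
     (\<exists>v S. is_vertex k v \<and> S \<subseteq> C v \<and> finite S \<and> card S = k \<and>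
        C' = (\<lambda>w. if w = v then C v - S
                   else if (\<exists>i<k. w = v @ [i])
                        then insert (sorted_list_of_set S ! last w) (C w)
                   else C w))"

definition init_config :: "nat \<Rightarrow> nat \<Rightarrow> config" where
  "init_config k l = (\<lambda>w. if w = [] then {1..k ^ l} else {})"

definition reachable :: "nat \<Rightarrow> nat \<Rightarrow> config \<Rightarrow> bool" where
  "reachable k l C \<longleftrightarrow> (fire k)\<^sup>*\<^sup>* (init_config k l) C"

definition stable :: "nat \<Rightarrow> config \<Rightarrow> bool" where
  "stable k C \<longleftrightarrow> (\<forall>v. is_vertex k v \<longrightarrow> finite (C v) \<and> card (C v) < k)"

(* The j-th vertex (0-based, left to right) of layer l+1: base-k digits of j,
   most significant first, of length l. *)
definition layer_vertex :: "nat \<Rightarrow> nat \<Rightarrow> nat \<Rightarrow> vertex" where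
  "layer_vertex k l j = map (\<lambda>i. j div k ^ (l - 1 - i) mod k) [0..<l]"

(* The permutation read left to right on layer l+1 (positions 0..k^l-1). *)
definition perm_of :: "nat \<Rightarrow> nat \<Rightarrow> config \<Rightarrow> nat \<Rightarrow> nat" where
  "perm_of k l C j = the_elem (C (layer_vertex k l j))"

definition lds :: "nat \<Rightarrow> (nat \<Rightarrow> nat) \<Rightarrow> nat" where
  "lds n s = Max {card I | I. I \<subseteq> {..<n} \<and> (\<forall>i\<in>I. \<forall>j\<in>I. i < j \<longrightarrow> s j < s i)}"

definition D :: "nat \<Rightarrow> nat \<Rightarrow> nat" where
  "D k l = Max {lds (k ^ l) (perm_of k l C) | C. reachable k l C \<and> stable k C}"

end

theory Submission
  imports Defs
begin


fun nv :: "nat \<Rightarrow> nat list \<Rightarrow> nat" where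
  "nv k [] = 0"
| "nv k (d # w) = d * k ^ length w + nv k w"

lemma nv_snoc: "nv k (w @ [b]) = k * nv k w + b"
  by (induction w) (auto simp: algebra_simps)

lemma nv_less: "\<forall>d\<in>set w. d < k \<Longrightarrow> nv k w < k ^ length w"
proof (induction w)
  case Nil then show ?case by simp
next
  case (Cons d w)
  then have h: "nv k w < k ^ length w" "d < k" by auto
  have "d * k ^ length w + nv k w < d * k ^ length w + k ^ length w" using h by simp
  also have "\<dots> = (d + 1) * k ^ length w" by simp
  also have "\<dots> \<le> k * k ^ length w" using h(2) by (intro mult_le_mono1) simp
  finally show ?case by simp
qed

lemma nv_replicate0: "nv k (replicate n 0) = 0"
  by (induction n) auto

lemma lv_nth: "i < l \<Longrightarrow> layer_vertex k l j ! i = j div k ^ (l - 1 - i) mod k"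
  by (simp add: layer_vertex_def)

lemma lv_len: "length (layer_vertex k l j) = l"
  by (simp add: layer_vertex_def)

lemma lv_nv: "\<forall>d\<in>set w. d < k \<Longrightarrow> layer_vertex k (length w) (nv k w) = w"
proof (induction w)
  case Nil then show ?case by (simp add: layer_vertex_def)
next
  case (Cons d w)
  then have IH: "layer_vertex k (length w) (nv k w) = w" and d: "d < k" and wl: "nv k w < k ^ length w"
    using nv_less[of w k] by auto
  show ?case
  proof (rule nth_equalityI)
    show "length (layer_vertex k (length (d # w)) (nv k (d # w))) = length (d # w)" by (simp add: lv_len)
  next
    fix i assume i: "i < length (layer_vertex k (length (d # w)) (nv k (d # w)))"
    then have i': "i < Suc (length w)" by (simp add: lv_len)
    show "layer_vertex k (length (d # w)) (nv k (d # w)) ! i = (d # w) ! i"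
    proof (cases i)
      case 0
      have kp: "k > 0" using d by simp
      have "(d * k ^ length w + nv k w) div k ^ length w = d + nv k w div k ^ length w"
        using kp by simp
      also have "\<dots> = d" using wl by simp
      finally show ?thesis using 0 d by (simp add: lv_nth)
    next
      case (Suc i2)
      define p where "p = length w - 1 - i2"
      have i2: "i2 < length w" using i' Suc by simp
      have pw: "k ^ length w = k ^ Suc i2 * k ^ p"
      proof -
        have "length w = Suc i2 + p" unfolding p_def using i2 by simp
        then show ?thesis by (metis power_add)
      qed
      have kp: "k > 0" using d by simp
      have "(d * k ^ length w + nv k w) div k ^ p = d * k ^ Suc i2 + nv k w div k ^ p"
      proof -
        have "d * k ^ length w + nv k w = nv k w + (d * k ^ Suc i2) * k ^ p" by (simp add: pw)
        moreover have "(nv k w + (d * k ^ Suc i2) * k ^ p) div k ^ p = d * k ^ Suc i2 + nv k w div k ^ p"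
          using div_mult_self1[of "k^p" "nv k w" "d * k ^ Suc i2"] kp by simp
        ultimately show ?thesis by (simp only:)
      qed
      then have "(d * k ^ length w + nv k w) div k ^ p mod k = nv k w div k ^ p mod k"
        by (simp add: mod_add_left_eq[symmetric])
      moreover have "w ! i2 = nv k w div k ^ p mod k"
        using IH i2 lv_nth[of i2 "length w" k "nv k w"] p_def by simp
      ultimately show ?thesis using Suc i2 by (simp add: lv_nth p_def)
    qed
  qed
qed




lemma chain_rtranclp: "(\<forall>j<n. R (f j) (f (Suc j))) \<Longrightarrow> R\<^sup>*\<^sup>* (f 0) (f n)"
  by (induction n) (auto intro: rtranclp.rtrancl_into_rtrancl)

lemma sorted_AP:
  assumes "s > 0" and that: "i < k"
  shows "sorted_list_of_set ((\<lambda>i. c + s * (b + i)) ` {..<k}) ! i = c + s * (b + i)"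
proof -
  define xs where "xs = map (\<lambda>i. c + s * (b + i)) [0..<k]"
  have set: "set xs = (\<lambda>i. c + s * (b + i)) ` {..<k}" unfolding xs_def by auto
  have "sorted xs" unfolding xs_def by (auto simp: sorted_iff_nth_mono)
  moreover have "distinct xs" unfolding xs_def using assms
    by (auto simp: distinct_map inj_on_def)
  ultimately have "sorted_list_of_set (set xs) = xs"
    by (simp add: sorted_list_of_set_sort_remdups distinct_remdups_id sorted_sort_id)
  then show ?thesis using set that xs_def by simp
qed

definition Cj :: "nat \<Rightarrow> nat \<Rightarrow> vertex \<Rightarrow> nat \<Rightarrow> nat \<Rightarrow> config \<Rightarrow> nat \<Rightarrow> config" where
  "Cj k m v c s C j = (\<lambda>w. if w = v then (\<lambda>y. c + s*y) ` {j*k..<k^(Suc m)}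
       else if (\<exists>i<k. w = v@[i]) then (\<lambda>y. c + s*(last w + k*y)) ` {..<j} else C w)"

lemma fire_step:
  assumes k: "k > 0" and v: "is_vertex k v" and s: "s > 0" and j: "j < k^m"
  shows "fire k (Cj k m v c s C j) (Cj k m v c s C (Suc j))"
proof -
  define S where "S = (\<lambda>i. c + s * (j*k + i)) ` {..<k}"
  have jk: "j*k + k \<le> k^Suc m" using j k
    by (metis add.commute mult.commute mult_Suc_right mult_le_mono2 power_Suc Suc_leI)
  have Ssub: "S \<subseteq> Cj k m v c s C j v"
    unfolding S_def Cj_def using jk by force
  have card: "card S = k" unfolding S_def using s
    by (subst card_image) (auto simp: inj_on_def)
  have srt: "sorted_list_of_set S ! i = c + s * (j*k + i)" if "i < k" for i
    unfolding S_def using sorted_AP[OF s that] by simp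
  have eq: "Cj k m v c s C (Suc j) = (\<lambda>w. if w = v then Cj k m v c s C j v - S
                   else if (\<exists>i<k. w = v @ [i])
                        then insert (sorted_list_of_set S ! last w) (Cj k m v c s C j w)
                   else Cj k m v c s C j w)"
  proof (rule ext)
    fix w
    show "Cj k m v c s C (Suc j) w = (if w = v then Cj k m v c s C j v - S
                   else if (\<exists>i<k. w = v @ [i])
                        then insert (sorted_list_of_set S ! last w) (Cj k m v c s C j w)
                   else Cj k m v c s C j w)"
    proof (cases "w = v")
      case True
      have "(\<lambda>y. c + s*y) ` {Suc j*k..<k^(Suc m)} = (\<lambda>y. c + s*y) ` {j*k..<k^(Suc m)} - S"
      proof
        show "(\<lambda>y. c + s*y) ` {Suc j*k..<k^(Suc m)} \<subseteq> (\<lambda>y. c + s*y) ` {j*k..<k^(Suc m)} - S"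
          unfolding S_def using s by auto
        show "(\<lambda>y. c + s*y) ` {j*k..<k^(Suc m)} - S \<subseteq> (\<lambda>y. c + s*y) ` {Suc j*k..<k^(Suc m)}"
        proof
          fix x assume x: "x \<in> (\<lambda>y. c + s*y) ` {j*k..<k^(Suc m)} - S"
          then obtain y where y0: "x = c + s*y" "y \<in> {j*k..<k^Suc m}" by blast
          then have y: "x = c + s*y" "j*k \<le> y" "y < k^Suc m" by auto
          have "\<not> y < j*k + k"
          proof
            assume "y < j*k+k"
            then have "x \<in> S" unfolding S_def using y
              by (auto intro!: image_eqI[of _ _ "y - j*k"])
            then show False using x by auto
          qed
          then show "x \<in> (\<lambda>y. c + s*y) ` {Suc j*k..<k^(Suc m)}" using y by auto
        qed
      qed
      then show ?thesis using True unfolding Cj_def by simp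
    next
      case False
      show ?thesis
      proof (cases "\<exists>i<k. w = v@[i]")
        case True
        then obtain i where i: "i < k" "w = v@[i]" by auto
        have "(\<lambda>y. c + s*(i + k*y)) ` {..<Suc j} = insert (c + s * (j*k + i)) ((\<lambda>y. c + s*(i + k*y)) ` {..<j})"
          by (simp add: lessThan_Suc algebra_simps)
        then show ?thesis using True False i srt unfolding Cj_def by simp
      next
        case F2: False
        have e: "(if w = v then A else if (\<exists>i<k. w = v@[i]) then B else X) = X" for A B X :: "nat set"
          using False F2 by auto
        show ?thesis unfolding Cj_def e ..
      qed
    qed
  qed
  show ?thesis unfolding fire_def
    apply (rule exI[of _ v], rule exI[of _ S])
    using v Ssub card eq unfolding S_def by auto
qed




definition res :: "nat \<Rightarrow> nat \<Rightarrow> vertex \<Rightarrow> nat \<Rightarrow> nat \<Rightarrow> config \<Rightarrow> config" where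
  "res k m v c s C = (\<lambda>w. if take (length v) w = v then
      (if length (drop (length v) w) = m \<and> is_vertex k (drop (length v) w)
       then {c + s * nv k (rev (drop (length v) w))} else {}) else C w)"

lemma under_cases:
  obtains u where "w = v @ u" | "take (length v) w \<noteq> v"
  by (metis append_take_drop_id)

definition Dd :: "nat \<Rightarrow> nat \<Rightarrow> vertex \<Rightarrow> nat \<Rightarrow> nat \<Rightarrow> config \<Rightarrow> nat \<Rightarrow> config" where
  "Dd k m v c s C i = (\<lambda>w. if take (length v) w = v then
      (case drop (length v) w of [] \<Rightarrow> {}
       | a # u' \<Rightarrow> if a < i then (if length u' = m \<and> is_vertex k u' then {c + s * (a + k * nv k (rev u'))} else {})
                   else if a < k \<and> u' = [] then (\<lambda>y. (c + s*a) + (s*k)*y) ` {..<k^m} else {})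
      else C w)"

lemma reach:
  assumes "k > 0" "is_vertex k v" "s > 0" "C v = (\<lambda>y. c + s*y) ` {..<k^m}"
    "\<forall>u. u \<noteq> [] \<longrightarrow> C (v@u) = {}"
  shows "(fire k)\<^sup>*\<^sup>* C (res k m v c s C)"
  using assms
proof (induction m arbitrary: v c s C)
  case 0
  have "res k 0 v c s C = C"
  proof
    fix w
    show "res k 0 v c s C w = C w"
    proof (cases w v rule: under_cases)
      case (1 u)
      then show ?thesis using 0 by (cases u) (auto simp: res_def is_vertex_def)
    next
      case 2
      then show ?thesis by (simp add: res_def)
    qed
  qed
  then show ?case by simp
next
  case (Suc m)
  have kp: "k > 0" and v: "is_vertex k v" and s: "s > 0" using Suc.prems by auto
  have C0: "Cj k m v c s C 0 = C"
  proof
    fix w show "Cj k m v c s C 0 w = C w"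
      using Suc.prems(4,5) by (auto simp: Cj_def lessThan_atLeast0)
  qed
  have ph1: "(fire k)\<^sup>*\<^sup>* C (Cj k m v c s C (k^m))"
    using chain_rtranclp[of "k^m" "fire k" "Cj k m v c s C"] fire_step[OF kp v s] C0 by auto
  have D0: "Dd k m v c s C 0 = Cj k m v c s C (k^m)"
  proof
    fix w show "Dd k m v c s C 0 w = Cj k m v c s C (k^m) w"
    proof (cases w v rule: under_cases)
      case (1 u)
      show ?thesis
      proof (cases u)
        case Nil then show ?thesis using 1 by (simp add: Dd_def Cj_def)
      next
        case (Cons a u')
        show ?thesis
        proof (cases "a < k \<and> u' = []")
          case True
          then show ?thesis using 1 Cons by (auto simp: Dd_def Cj_def algebra_simps)
        next
          case False
          then have "C w = {}" using 1 Cons Suc.prems(5) by auto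
          then show ?thesis using 1 Cons False by (auto simp: Dd_def Cj_def)
        qed
      qed
    next
      case 2
      then have "w \<noteq> v" "\<forall>i. w \<noteq> v @ [i]" by auto
      then show ?thesis using 2 by (simp add: Dd_def Cj_def)
    qed
  qed
  have step: "(fire k)\<^sup>*\<^sup>* (Dd k m v c s C i) (Dd k m v c s C (Suc i))" if i: "i < k" for i
  proof -
    have vi: "is_vertex k (v@[i])" using v i by (auto simp: is_vertex_def)
    have a1: "Dd k m v c s C i (v@[i]) = (\<lambda>y. (c + s*i) + (s*k)*y) ` {..<k^m}"
      using i by (simp add: Dd_def)
    have a2: "\<forall>u. u \<noteq> [] \<longrightarrow> Dd k m v c s C i ((v@[i])@u) = {}"
      by (simp add: Dd_def)
    have IH: "(fire k)\<^sup>*\<^sup>* (Dd k m v c s C i) (res k m (v@[i]) (c + s*i) (s*k) (Dd k m v c s C i))"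
      using Suc.IH[OF kp vi _ a1 a2] s kp by simp
    have "res k m (v@[i]) (c + s*i) (s*k) (Dd k m v c s C i) = Dd k m v c s C (Suc i)"
    proof
      fix w
      show "res k m (v@[i]) (c + s*i) (s*k) (Dd k m v c s C i) w = Dd k m v c s C (Suc i) w"
      proof (cases w "v@[i]" rule: under_cases)
        case (1 u)
        then show ?thesis by (auto simp: res_def Dd_def algebra_simps)
      next
        case 2
        then have ne: "\<forall>u'. w \<noteq> v @ i # u'" by auto
        show ?thesis
        proof (cases w v rule: under_cases)
          case (1 u)
          then show ?thesis using 2 ne by (cases u) (auto simp: res_def Dd_def)
        next
          case 3: 2
          then show ?thesis using 2 by (simp add: res_def Dd_def)
        qed
      qed
    qed
    then show ?thesis using IH by simp
  qed
  have ph2: "(fire k)\<^sup>*\<^sup>* (Dd k m v c s C 0) (Dd k m v c s C k)"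
    using chain_rtranclp[of k "(fire k)\<^sup>*\<^sup>*" "Dd k m v c s C"] step by (simp add: rtranclp_idemp)
  have Dk: "Dd k m v c s C k = res k (Suc m) v c s C"
  proof
    fix w
    show "Dd k m v c s C k w = res k (Suc m) v c s C w"
    proof (cases w v rule: under_cases)
      case (1 u)
      then show ?thesis
        by (cases u) (auto simp: res_def Dd_def is_vertex_def nv_snoc algebra_simps)
    next
      case 2
      then show ?thesis by (simp add: res_def Dd_def)
    qed
  qed
  show ?case using ph1 ph2 D0 Dk by (metis rtranclp_trans)
qed




fun chainw :: "nat \<Rightarrow> nat \<Rightarrow> nat list set" where
  "chainw k 0 = {}"
| "chainw k (Suc 0) = {[k-1]}"
| "chainw k (Suc (Suc 0)) = (\<lambda>a. [a, k-1-a]) ` {..<k}"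
| "chainw k (Suc (Suc (Suc n))) =
     (\<lambda>(a,w). a # w @ [k-1-a]) ` ({..<k} \<times> chainw k (Suc n)) \<union>
     (\<lambda>a. Suc a # replicate (Suc n) 0 @ [k-1-a]) ` {..<k-1}"

fun fcount :: "nat \<Rightarrow> nat \<Rightarrow> nat" where
  "fcount k 0 = 0"
| "fcount k (Suc 0) = 1"
| "fcount k (Suc (Suc 0)) = k"
| "fcount k (Suc (Suc (Suc n))) = k * fcount k (Suc n) + (k - 1)"

lemma lexK: "(r::nat) < K \<Longrightarrow> r' < K \<Longrightarrow> (a*K + r < a'*K + r') = (a < a' \<or> a = a' \<and> r < r')"
proof -
  assume r: "r < K" "r' < K"
  show ?thesis
  proof
    assume h: "a*K + r < a'*K + r'"
    show "a < a' \<or> a = a' \<and> r < r'"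
    proof (rule ccontr)
      assume "\<not> (a < a' \<or> a = a' \<and> r < r')"
      then consider "a' < a" | "a = a'" "r' \<le> r" by linarith
      then show False
      proof cases
        case 1
        then have "(a'+1)*K \<le> a*K" by (intro mult_le_mono1) simp
        then show False using h r by simp
      next
        case 2 then show False using h by simp
      qed
    qed
  next
    assume "a < a' \<or> a = a' \<and> r < r'"
    then show "a*K + r < a'*K + r'"
    proof
      assume "a < a'"
      then have "(a+1)*K \<le> a'*K" by (intro mult_le_mono1) simp
      then show ?thesis using r by simp
    qed simp
  qed
qed

lemma nv_wrap: "nv k (a # w @ [b]) = a * k^(Suc (length w)) + (k * nv k w + b)"
  by (simp add: nv_snoc)

lemma nv_rev_wrap: "nv k (rev (a # w @ [b])) = b * k^(Suc (length w)) + (k * nv k (rev w) + a)"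
  by (simp add: nv_snoc)

lemma low_bound: "(x::nat) < k^l \<Longrightarrow> b < k \<Longrightarrow> k * x + b < k^Suc l"
proof -
  assume x: "x < k^l" and b: "b < k"
  have "k * x + b < k * x + k" using b by simp
  also have "\<dots> = k * (x+1)" by simp
  also have "\<dots> \<le> k * k^l" using x by (intro mult_le_mono2) simp
  finally show ?thesis by simp
qed

definition good :: "nat \<Rightarrow> nat \<Rightarrow> nat list set \<Rightarrow> bool" where
  "good k l T \<longleftrightarrow> (\<forall>w\<in>T. length w = l \<and> (\<forall>d\<in>set w. d < k) \<and> 0 < nv k w \<and> 0 < nv k (rev w)) \<and>
     (\<forall>u\<in>T. \<forall>w\<in>T. nv k u < nv k w \<longrightarrow> nv k (rev w) < nv k (rev u)) \<and> finite T"




lemma cmpW: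
  assumes "length x = l" "length y = l" "\<forall>d\<in>set x. d < k" "\<forall>d\<in>set y. d < k"
    "b < k" "b' < k"
  shows "(nv k (a#x@[b]) < nv k (a'#y@[b'])) = (a<a' \<or> a=a' \<and> (nv k x < nv k y \<or> nv k x = nv k y \<and> b < b'))"
proof -
  have x: "nv k x < k^l" and y: "nv k y < k^l" using nv_less assms by metis+
  have bx: "k * nv k x + b < k^Suc l" using low_bound[OF x assms(5)] .
  have "by": "k * nv k y + b' < k^Suc l" using low_bound[OF y assms(6)] .
  have i: "(k * nv k x + b < k * nv k y + b') = (nv k x < nv k y \<or> nv k x = nv k y \<and> b < b')"
    using lexK[of b k b' "nv k x" "nv k y"] assms(5,6) by (simp add: mult.commute)
  show ?thesis using lexK[OF bx "by", of a a'] assms(1,2) i by (simp add: nv_wrap nv_snoc)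
qed

lemma arithP:
  fixes a b a' b' X Y RX RY k :: nat
  assumes l1: "a<a' \<or> a=a' \<and> (X < Y \<or> X = Y \<and> b<b')"
   and px: "(tx \<and> a+b = k-1 \<and> 0<X \<and> 0<RX) \<or> (X=0 \<and> RX = 0 \<and> a+b=k)"
   and py: "(ty \<and> a'+b' = k-1 \<and> 0<Y \<and> 0<RY) \<or> (Y=0 \<and> RY = 0 \<and> a'+b'=k)"
   and ch: "X<Y \<Longrightarrow> tx \<Longrightarrow> ty \<Longrightarrow> RY < RX"
   and k: "k \<ge> 2" "a < k" "b < k" "a' < k" "b' < k"
  shows "b'<b \<or> b'=b \<and> (RY < RX \<or> RY = RX \<and> a' < a)"
  using px py
proof (elim disjE conjE)
  assume "tx" "a+b = k-1" "0<X" "0<RX" "ty" "a'+b' = k-1" "0<Y" "0<RY"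
  then show ?thesis using l1 ch k by auto
qed (use l1 k in auto)

lemma chain_main:
  shows "k \<ge> 2 \<Longrightarrow> l \<ge> 1 \<Longrightarrow> good k l (chainw k l) \<and> card (chainw k l) = fcount k l"
proof (induction k l rule: chainw.induct)
  case (1 k) then show ?case by simp
next
  case (2 k) then show ?case by (auto simp: good_def)
next
  case (3 k)
  then have k: "k \<ge> 2" by simp
  have inj: "inj_on (\<lambda>a. [a, k-1-a]) {..<k}" by (auto simp: inj_on_def)
  have g: "good k 2 ((\<lambda>a. [a, k-1-a]) ` {..<k})"
    unfolding good_def
  proof (intro conjI)
    show "\<forall>w\<in>(\<lambda>a. [a, k - 1 - a]) ` {..<k}. length w = 2 \<and> (\<forall>d\<in>set w. d < k) \<and> 0 < nv k w \<and> 0 < nv k (rev w)"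
    proof
      fix w assume "w \<in> (\<lambda>a. [a, k - 1 - a]) ` {..<k}"
      then obtain a where a: "a < k" "w = [a, k-1-a]" by auto
      have "a \<le> a * k" using k by simp
      have "0 < a * k + (k - 1 - a) \<and> 0 < (k-1-a) * k + a"
      proof (cases "a = 0")
        case True then show ?thesis using k by simp
      next
        case False then have "0 < a * k" using k by simp
        then show ?thesis using False by simp
      qed
      moreover have e1: "nv k w = a * k + (k - 1 - a)" "nv k (rev w) = (k-1-a) * k + a" using a by simp_all
      moreover have "length w = 2 \<and> (\<forall>d\<in>set w. d < k)" using a by auto
      ultimately show "length w = 2 \<and> (\<forall>d\<in>set w. d < k) \<and> 0 < nv k w \<and> 0 < nv k (rev w)"
        by metis
    qed
    show "\<forall>u\<in>(\<lambda>a. [a, k - 1 - a]) ` {..<k}. \<forall>w\<in>(\<lambda>a. [a, k - 1 - a]) ` {..<k}. nv k u < nv k w \<longrightarrow> nv k (rev w) < nv k (rev u)"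
    proof (clarify)
      fix a a' assume a: "a < k" "a' < k" and lt: "nv k [a, k-1-a] < nv k [a', k-1-a']"
      have "(a*k + (k-1-a) < a'*k + (k-1-a')) = (a < a' \<or> a = a' \<and> k-1-a < k-1-a')"
        using lexK[of "k-1-a" k "k-1-a'" a a'] a by simp
      moreover have "((k-1-a')*k + a' < (k-1-a)*k + a) = (k-1-a' < k-1-a \<or> k-1-a' = k-1-a \<and> a' < a)"
        using lexK[of a' k a "k-1-a'" "k-1-a"] a by simp
      ultimately show "nv k (rev [a', k-1-a']) < nv k (rev [a, k-1-a])"
        using lt a by auto
    qed
  qed simp
  show ?case using g inj by (simp add: card_image numeral_2_eq_2)
next
  case (4 k n)
  then have k: "k \<ge> 2" by simp
  define l where "l = Suc n"
  define T where "T = chainw k l"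
  have IH: "good k l T" "card T = fcount k l" using 4 unfolding T_def l_def by auto
  have Tl: "\<forall>w\<in>T. length w = l \<and> (\<forall>d\<in>set w. d < k) \<and> 0 < nv k w \<and> 0 < nv k (rev w)"
   and Tc: "\<forall>u\<in>T. \<forall>w\<in>T. nv k u < nv k w \<longrightarrow> nv k (rev w) < nv k (rev u)"
   and Tf: "finite T" using IH(1) unfolding good_def by auto
  define M where "M = (\<lambda>(a,w). a # w @ [k-1-a]) ` ({..<k} \<times> T)"
  define E where "E = (\<lambda>a. Suc a # replicate l 0 @ [k-1-a]) ` {..<k-1}"
  have T': "chainw k (Suc (Suc (Suc n))) = M \<union> E" unfolding M_def E_def T_def l_def by simp
  define P where "P = (\<lambda>a x b. (x \<in> T \<and> a < k \<and> a + b = k - 1) \<or> (x = replicate l 0 \<and> 0 < a \<and> a < k \<and> a + b = k))"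
  have memP: "\<exists>a x b. u = a # x @ [b] \<and> P a x b" if "u \<in> M \<union> E" for u
  proof -
    from that show ?thesis
    proof
      assume "u \<in> M"
      then obtain a w where "a < k" "w \<in> T" "u = a # w @ [k-1-a]" unfolding M_def by auto
      then show ?thesis unfolding P_def using k by (intro exI[of _ a] exI[of _ w] exI[of _ "k-1-a"]) auto
    next
      assume "u \<in> E"
      then obtain e where "e < k - 1" "u = Suc e # replicate l 0 @ [k-1-e]" unfolding E_def by auto
      then show ?thesis unfolding P_def using k
        by (intro exI[of _ "Suc e"] exI[of _ "replicate l 0"] exI[of _ "k-1-e"]) auto
    qed
  qed
  have Pfacts: "length x = l \<and> (\<forall>d\<in>set x. d < k) \<and> a < k \<and> b < k" if "P a x b" for a x b
    using that Tl k unfolding P_def by auto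
  have P0: "(x \<in> T \<and> a + b = k - 1 \<and> 0 < nv k x \<and> 0 < nv k (rev x)) \<or> (nv k x = 0 \<and> nv k (rev x) = 0 \<and> a + b = k)"
    if "P a x b" for a x b
    using that Tl unfolding P_def by (auto simp: nv_replicate0)
  have chainP: "nv k (rev (a'#y@[b'])) < nv k (rev (a#x@[b]))"
    if p: "P a x b" "P a' y b'" and lt: "nv k (a#x@[b]) < nv k (a'#y@[b'])" for a x b a' y b'
  proof -
    note f = Pfacts[OF p(1)] Pfacts[OF p(2)]
    have l1: "a<a' \<or> a=a' \<and> (nv k x < nv k y \<or> nv k x = nv k y \<and> b < b')"
      using lt cmpW[of x l y k b b' a a'] f by simp
    have rx: "rev (a#x@[b]) = b # rev x @ [a]" "rev (a'#y@[b']) = b' # rev y @ [a']" by simp_all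
    have goal: "nv k (rev (a'#y@[b'])) < nv k (rev (a#x@[b])) =
       (b'<b \<or> b'=b \<and> (nv k (rev y) < nv k (rev x) \<or> nv k (rev y) = nv k (rev x) \<and> a' < a))"
      unfolding rx using cmpW[of "rev y" l "rev x" k a' a b' b] f by simp
    have ch: "nv k x < nv k y \<Longrightarrow> x \<in> T \<Longrightarrow> y \<in> T \<Longrightarrow> nv k (rev y) < nv k (rev x)"
      using Tc by blast
    show ?thesis unfolding goal
      using arithP[OF l1 P0[OF p(1)] P0[OF p(2)] ch] k f by blast
  qed
  have good': "good k (Suc (Suc (Suc n))) (M \<union> E)"
    unfolding good_def
  proof (intro conjI)
    show "\<forall>w\<in>M \<union> E. length w = Suc (Suc (Suc n)) \<and> (\<forall>d\<in>set w. d < k) \<and> 0 < nv k w \<and> 0 < nv k (rev w)"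
    proof
    fix w assume "w \<in> M \<union> E"
    then obtain a x b where w: "w = a # x @ [b]" and p: "P a x b" using memP by blast
    have f: "length x = l" "\<forall>d\<in>set x. d < k" "a < k" "b < k" using Pfacts[OF p] by auto
    have kp: "k > 0" using k by simp
    have pos: "0 < nv k (a#x@[b])" "0 < nv k (rev (a#x@[b]))"
    proof -
      have "0 < a * k^(Suc l) + (k * nv k x + b) \<and> 0 < b * k^(Suc l) + (k * nv k (rev x) + a)"
        using P0[OF p] kp by auto
      moreover have "nv k (a#x@[b]) = a * k^(Suc l) + (k*nv k x + b)" by (metis nv_wrap f(1))
      moreover have "nv k (rev (a#x@[b])) = b * k^(Suc l) + (k*nv k (rev x) + a)" by (metis nv_rev_wrap f(1))
      ultimately show "0 < nv k (a#x@[b])" "0 < nv k (rev (a#x@[b]))" by metis+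
    qed
    show "length w = Suc (Suc (Suc n)) \<and> (\<forall>d\<in>set w. d < k) \<and> 0 < nv k w \<and> 0 < nv k (rev w)"
      using w f pos l_def by auto
    qed
  next
    show "\<forall>u\<in>M \<union> E. \<forall>w\<in>M \<union> E. nv k u < nv k w \<longrightarrow> nv k (rev w) < nv k (rev u)"
    proof (intro ballI impI)
    fix u w assume "u \<in> M \<union> E" "w \<in> M \<union> E" "nv k u < nv k w"
    then show "nv k (rev w) < nv k (rev u)" using memP chainP by metis
    qed
  next
    show "finite (M \<union> E)" unfolding M_def E_def using Tf by simp
  qed
  have cM: "card M = k * card T" unfolding M_def
    by (subst card_image) (auto simp: inj_on_def card_cartesian_product)
  have cE: "card E = k - 1" unfolding E_def
    by (subst card_image) (auto simp: inj_on_def)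
  have disj: "M \<inter> E = {}" unfolding M_def E_def by auto
  have "card (M \<union> E) = card M + card E"
    using disj Tf by (intro card_Un_disjoint) (auto simp: M_def E_def)
  then show ?case using good' T' cM cE IH(2) l_def by simp
qed




lemma fcount_formula:
  "2 \<le> k \<Longrightarrow> 1 \<le> l \<Longrightarrow> (even l \<longrightarrow> int (fcount k l) = (int k + 1) * int k ^ (l div 2 - 1) - 1) \<and>
     (odd l \<longrightarrow> int (fcount k l) = 2 * int k ^ ((l - 1) div 2) - 1)"
proof (induction k l rule: fcount.induct)
  case (4 k n)
  have IH: "(even (Suc n) \<longrightarrow> int (fcount k (Suc n)) = (int k + 1) * int k ^ (Suc n div 2 - 1) - 1) \<and>
     (odd (Suc n) \<longrightarrow> int (fcount k (Suc n)) = 2 * int k ^ ((Suc n - 1) div 2) - 1)" using 4 by simp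
  have kk: "int (k - 1) = int k - 1" using 4 by simp
  have f: "int (fcount k (Suc (Suc (Suc n)))) = int k * int (fcount k (Suc n)) + int k - 1" using kk by simp
  show ?case
  proof (intro conjI impI)
    assume e: "even (Suc (Suc (Suc n)))"
    then have e1: "even (Suc n)" by simp
    have ex: "Suc (Suc (Suc n)) div 2 - 1 = Suc (Suc n div 2 - 1)" using e1 by presburger
    show "int (fcount k (Suc (Suc (Suc n)))) = (int k + 1) * int k ^ (Suc (Suc (Suc n)) div 2 - 1) - 1"
    proof -
      have F: "int (fcount k (Suc n)) = (int k + 1) * int k ^ (Suc n div 2 - 1) - 1" using IH e1 by simp
      show ?thesis unfolding f ex F by (simp add: algebra_simps)
    qed
  next
    assume o: "odd (Suc (Suc (Suc n)))"
    then have o1: "odd (Suc n)" by simp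
    have ex: "(Suc (Suc (Suc n)) - 1) div 2 = Suc ((Suc n - 1) div 2)" by simp
    show "int (fcount k (Suc (Suc (Suc n)))) = 2 * int k ^ ((Suc (Suc (Suc n)) - 1) div 2) - 1"
    proof -
      have F: "int (fcount k (Suc n)) = 2 * int k ^ ((Suc n - 1) div 2) - 1" using IH o1 by simp
      show ?thesis unfolding f ex F by (simp add: algebra_simps)
    qed
  qed
qed auto

lemma lds_ge:
  assumes "I \<subseteq> {..<n}" "\<forall>i\<in>I. \<forall>j\<in>I. i < j \<longrightarrow> s j < s i"
  shows "card I \<le> lds n s"
  unfolding lds_def
proof (rule Max_ge)
  show "finite {card I |I. I \<subseteq> {..<n} \<and> (\<forall>i\<in>I. \<forall>j\<in>I. i < j \<longrightarrow> s j < s i)}"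
    by (rule finite_subset[of _ "card ` Pow {..<n}"]) auto
qed (use assms in blast)

lemma lds_le: "lds n s \<le> n"
  unfolding lds_def
proof (rule Max.boundedI)
  show "finite {card I |I. I \<subseteq> {..<n} \<and> (\<forall>i\<in>I. \<forall>j\<in>I. i < j \<longrightarrow> s j < s i)}"
    by (rule finite_subset[of _ "card ` Pow {..<n}"]) auto
  show "{card I |I. I \<subseteq> {..<n} \<and> (\<forall>i\<in>I. \<forall>j\<in>I. i < j \<longrightarrow> s j < s i)} \<noteq> {}" by blast
  fix x assume "x \<in> {card I |I. I \<subseteq> {..<n} \<and> (\<forall>i\<in>I. \<forall>j\<in>I. i < j \<longrightarrow> s j < s i)}"
  then obtain I where "x = card I" "I \<subseteq> {..<n}" by blast
  then show "x \<le> n" using card_mono[of "{..<n}" I] by simp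
qed

lemma D_ge:
  assumes "reachable k l C" "stable k C"
  shows "lds (k^l) (perm_of k l C) \<le> D k l"
  unfolding D_def
proof (rule Max_ge)
  show "finite {lds (k ^ l) (perm_of k l C) |C. reachable k l C \<and> stable k C}"
    by (rule finite_subset[of _ "{..k^l}"]) (auto simp: lds_le)
qed (use assms in blast)

lemma main_bound:
  assumes k: "k \<ge> 2" and l: "l \<ge> 1"
  shows "fcount k l \<le> D k l"
proof -
  define Cf where "Cf = res k l [] 1 1 (init_config k l)"
  have kp: "k > 0" using k by simp
  have init: "init_config k l [] = (\<lambda>y. 1 + 1*y) ` {..<k^l}"
  proof -
    have "(\<lambda>y::nat. 1 + 1*y) = Suc" by auto
    then show ?thesis by (simp add: init_config_def image_Suc_lessThan)
  qed
  have r: "reachable k l Cf" unfolding reachable_def Cf_def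
    by (rule reach[where k=k and v="[]" and s=1 and c=1 and m=l and C="init_config k l", OF kp _ _ init]) (auto simp: is_vertex_def init_config_def)
  have Cf: "Cf w = (if length w = l \<and> is_vertex k w then {1 + nv k (rev w)} else {})" for w
    by (simp add: Cf_def res_def)
  have st: "stable k Cf" unfolding stable_def Cf using k by auto
  define T where "T = chainw k l"
  have g: "good k l T" "card T = fcount k l" using chain_main[OF k l] T_def by auto
  have Tl: "\<forall>w\<in>T. length w = l \<and> (\<forall>d\<in>set w. d < k)"
   and Tc: "\<forall>u\<in>T. \<forall>w\<in>T. nv k u < nv k w \<longrightarrow> nv k (rev w) < nv k (rev u)"
   using g(1) unfolding good_def by auto
  have lvT: "layer_vertex k l (nv k w) = w" if "w \<in> T" for w
    using lv_nv[of w k] Tl that by auto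
  have perm: "perm_of k l Cf (nv k w) = 1 + nv k (rev w)" if "w \<in> T" for w
    using that lvT Tl unfolding perm_of_def Cf by (auto simp: is_vertex_def)
  have inj: "inj_on (nv k) T" by (metis inj_onI lvT)
  have sub: "nv k ` T \<subseteq> {..<k^l}" using Tl nv_less by fastforce
  have dec: "\<forall>i\<in>nv k ` T. \<forall>j\<in>nv k ` T. i < j \<longrightarrow> perm_of k l Cf j < perm_of k l Cf i"
    using Tc perm by auto
  have "fcount k l = card (nv k ` T)" using g(2) inj by (simp add: card_image)
  also have "\<dots> \<le> lds (k^l) (perm_of k l Cf)" by (rule lds_ge[OF sub dec])
  also have "\<dots> \<le> D k l" by (rule D_ge[OF r st])
  finally show ?thesis .
qed



theorem proposition8p1:
  fixes k l :: nat
  assumes "k \<ge> 2" and "l \<ge> 1"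
  shows "(even l \<longrightarrow> int (D k l) \<ge> (int k + 1) * int k ^ (l div 2 - 1) - 1) \<and>
         (odd l \<longrightarrow> int (D k l) \<ge> 2 * int k ^ ((l - 1) div 2) - 1)"
proof -
  have b: "int (fcount k l) \<le> int (D k l)" using main_bound[OF assms] by simp
  show ?thesis using fcount_formula[OF assms] b by auto
qed

end
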